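(* Let $q\geq 2$ be a prime power. In $\mathrm{PG}(2,q^2)$ there exists a semioval $\mathcal{S}\subset\mathcal{H}_q$ of size $k$ for every integer $k\in\{q^3-q^2+q\}\cup[q^3-q^2+q+2,\,q^3+1]$.
   Context: $\mathrm{PG}(2,q^2)$ is the Desarguesian projective plane over $\mathbb{F}_{q^2}$. $\mathcal{H}_q$ denotes the Hermitian curve, the set of points of $\mathrm{PG}(2,q^2)$ satisfying $X_2X_0^q+X_2^qX_0+X_1^{q+1}=0$ (it has $q^3+1$ points). A semioval is a non-empty pointset $\mathcal{S}$ such that for every $P\in\mathcal{S}$ there is a unique line $t_P$ with $\mathcal{S}\cap t_P=\{P\}$. *)

theory Defs
  imports "HOL-Computational_Algebra.Primes"
begin

type_synonym 'a vec3 = "'a \<times> 'a \<times> 'a"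

definition proj_point :: "('a::field) vec3 \<Rightarrow> 'a vec3 set" where
  "proj_point v = (case v of (x0, x1, x2) \<Rightarrow> {(c * x0, c * x1, c * x2) | c. c \<noteq> 0})"

definition PG_points :: "('a::field) vec3 set set" where
  "PG_points = {proj_point v | v. v \<noteq> (0, 0, 0)}"

definition PG_line :: "('a::field) vec3 \<Rightarrow> 'a vec3 set set" where
  "PG_line u = (case u of (a, b, c) \<Rightarrow>
     {P \<in> PG_points. \<exists>x0 x1 x2. (x0, x1, x2) \<in> P \<and> a * x0 + b * x1 + c * x2 = 0})"

definition PG_lines :: "('a::field) vec3 set set set" where
  "PG_lines = {PG_line u | u. u \<noteq> (0, 0, 0)}"

definition hermitian_curve :: "nat \<Rightarrow> ('a::field) vec3 set set" where
  "hermitian_curve q = {P \<in> PG_points. \<exists>x0 x1 x2. (x0, x1, x2) \<in> P \<and>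
       x2 * x0 ^ q + x2 ^ q * x0 + x1 ^ (q + 1) = 0}"

definition semioval :: "('a::field) vec3 set set \<Rightarrow> bool" where
  "semioval S \<longleftrightarrow> S \<noteq> {} \<and> S \<subseteq> PG_points \<and>
     (\<forall>P \<in> S. \<exists>!t. t \<in> PG_lines \<and> S \<inter> t = {P})"

end

theory Submission
  imports Defs "HOL-Computational_Algebra.Polynomial"
begin

lemma roots_bound:
  fixes c d :: "'a::field"
  assumes "k \<ge> 2"
  shows "card {x. x ^ k + c * x + d = 0} \<le> k"
proof -
  define P where "P = monom (1::'a) k + [:d, c:]"
  have ev: "poly P x = x ^ k + c * x + d" for x
    by (simp add: P_def poly_monom algebra_simps)
  obtain j where kj: "k = Suc (Suc j)" using assms by (metis add_2_eq_Suc le_Suc_ex)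
  have co: "coeff P k = 1" using kj by (simp add: P_def coeff_monom)
  hence nz: "P \<noteq> 0" by auto
  have d1: "degree [:d, c:] \<le> k"
    using assms degree_pCons_le[of d "[:c:]"] by simp
  have dg: "degree P \<le> k"
    unfolding P_def by (rule degree_add_le[OF _ d1]) (simp add: degree_monom_le)
  have "card {x. poly P x = 0} \<le> degree P" by (rule card_poly_roots_bound[OF nz])
  thus ?thesis using dg ev by simp
qed

lemma fiber_exact:
  assumes fA: "finite A" and fB: "finite B" and im: "f ` A \<subseteq> B" and cB: "card B \<le> b"
    and fib: "\<And>y. y \<in> B \<Longrightarrow> card {x\<in>A. f x = y} \<le> a"
    and cA: "card A = a * b" and y: "y \<in> B"
  shows "card {x\<in>A. f x = y} = a"
proof (rule ccontr)
  assume ne: "card {x\<in>A. f x = y} \<noteq> a"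
  hence lt: "card {x\<in>A. f x = y} < a" using fib[OF y] by simp
  have "card A = (\<Sum>z\<in>B. card {x\<in>A. f x = z})"
  proof -
    have "A = (\<Union>z\<in>B. {x\<in>A. f x = z})" using im by auto
    hence "card A = card (\<Union>z\<in>B. {x\<in>A. f x = z})" by simp
    also have "\<dots> = (\<Sum>z\<in>B. card {x\<in>A. f x = z})"
      by (rule card_UN_disjoint) (use fA fB in auto)
    finally show ?thesis .
  qed
  also have "\<dots> < (\<Sum>z\<in>B. a)"
    by (rule sum_strict_mono_ex1) (use fB fib y lt in auto)
  also have "\<dots> = a * card B" by simp
  also have "\<dots> \<le> a * b" using cB by simp
  finally show False using cA by simp
qed

definition aff :: "'a::field \<Rightarrow> 'a \<Rightarrow> 'a vec3 set" where
  "aff a b = proj_point (1, a, b)"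
definition Pinf :: "'a::field vec3 set" where
  "Pinf = proj_point (0, 0, 1)"

lemma proj_mem: "(y0, y1, y2) \<in> proj_point (x0, x1, x2) \<longleftrightarrow>
   (\<exists>c. c \<noteq> 0 \<and> y0 = c * x0 \<and> y1 = c * x1 \<and> y2 = c * x2)"
  by (auto simp: proj_point_def)

lemma proj_scale:
  assumes "c \<noteq> 0"
  shows "proj_point (c * x0, c * x1, c * x2) = proj_point (x0, x1, x2)"
proof (rule set_eqI)
  fix y :: "'a vec3"
  obtain y0 y1 y2 where y: "y = (y0, y1, y2)" by (cases y) auto
  show "y \<in> proj_point (c * x0, c * x1, c * x2) \<longleftrightarrow> y \<in> proj_point (x0, x1, x2)"
    unfolding y proj_mem
  proof
    assume "\<exists>d. d \<noteq> 0 \<and> y0 = d * (c * x0) \<and> y1 = d * (c * x1) \<and> y2 = d * (c * x2)"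
    then obtain d where "d \<noteq> 0" "y0 = d * (c * x0)" "y1 = d * (c * x1)" "y2 = d * (c * x2)" by blast
    thus "\<exists>d. d \<noteq> 0 \<and> y0 = d * x0 \<and> y1 = d * x1 \<and> y2 = d * x2"
      using assms by (intro exI[of _ "d * c"]) auto
  next
    assume "\<exists>d. d \<noteq> 0 \<and> y0 = d * x0 \<and> y1 = d * x1 \<and> y2 = d * x2"
    then obtain d where "d \<noteq> 0" "y0 = d * x0" "y1 = d * x1" "y2 = d * x2" by blast
    thus "\<exists>e. e \<noteq> 0 \<and> y0 = e * (c * x0) \<and> y1 = e * (c * x1) \<and> y2 = e * (c * x2)"
      using assms by (intro exI[of _ "d / c"]) auto
  qed
qed

lemma proj_self: "(x0, x1, x2) \<in> proj_point (x0, x1, x2)"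
  by (auto simp: proj_mem intro: exI[of _ 1])

lemma proj_in_PG: "(x0, x1, x2) \<noteq> (0,0,0) \<Longrightarrow> proj_point (x0, x1, x2) \<in> PG_points"
  unfolding PG_points_def by blast

lemma PG_cases:
  assumes "P \<in> PG_points"
  obtains x0 x1 x2 where "P = proj_point (x0, x1, x2)" "(x0, x1, x2) \<noteq> (0,0,0)"
  using assms unfolding PG_points_def by auto

lemma line_mem:
  assumes "(x0, x1, x2) \<noteq> (0,0,0)"
  shows "proj_point (x0, x1, x2) \<in> PG_line (u0, u1, u2) \<longleftrightarrow> u0 * x0 + u1 * x1 + u2 * x2 = 0"
proof
  assume "proj_point (x0, x1, x2) \<in> PG_line (u0, u1, u2)"
  then obtain y0 y1 y2 where y: "(y0, y1, y2) \<in> proj_point (x0, x1, x2)" "u0 * y0 + u1 * y1 + u2 * y2 = 0"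
    unfolding PG_line_def by auto
  then obtain c where c: "c \<noteq> 0" "y0 = c * x0" "y1 = c * x1" "y2 = c * x2" by (auto simp: proj_mem)
  hence "c * (u0 * x0 + u1 * x1 + u2 * x2) = 0" using y(2) by (simp add: algebra_simps)
  thus "u0 * x0 + u1 * x1 + u2 * x2 = 0" using c(1) by simp
next
  assume "u0 * x0 + u1 * x1 + u2 * x2 = 0"
  thus "proj_point (x0, x1, x2) \<in> PG_line (u0, u1, u2)"
    unfolding PG_line_def using proj_in_PG[OF assms] proj_self[of x0 x1 x2] by blast
qed

lemma herm_mem:
  assumes "(x0, x1, x2) \<noteq> (0,0,0)"
  shows "proj_point (x0, x1, x2) \<in> hermitian_curve q \<longleftrightarrow> x2 * x0 ^ q + x2 ^ q * x0 + x1 ^ (q + 1) = 0"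
proof
  assume "proj_point (x0, x1, x2) \<in> hermitian_curve q"
  then obtain y0 y1 y2 where y: "(y0, y1, y2) \<in> proj_point (x0, x1, x2)"
      "y2 * y0 ^ q + y2 ^ q * y0 + y1 ^ (q + 1) = 0"
    unfolding hermitian_curve_def by auto
  then obtain c where c: "c \<noteq> 0" "y0 = c * x0" "y1 = c * x1" "y2 = c * x2" by (auto simp: proj_mem)
  hence "c ^ (q + 1) * (x2 * x0 ^ q + x2 ^ q * x0 + x1 ^ (q + 1)) = 0" using y(2)
    by (simp add: algebra_simps power_mult_distrib)
  thus "x2 * x0 ^ q + x2 ^ q * x0 + x1 ^ (q + 1) = 0" using c(1) by simp
next
  assume "x2 * x0 ^ q + x2 ^ q * x0 + x1 ^ (q + 1) = 0"
  thus "proj_point (x0, x1, x2) \<in> hermitian_curve q"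
    unfolding hermitian_curve_def using proj_in_PG[OF assms] proj_self[of x0 x1 x2] by blast
qed

lemma aff_PG: "aff a b \<in> PG_points" unfolding aff_def by (rule proj_in_PG) simp
lemma Pinf_PG: "Pinf \<in> PG_points" unfolding Pinf_def by (rule proj_in_PG) simp

lemma aff_line: "aff a b \<in> PG_line (u0, u1, u2) \<longleftrightarrow> u0 + u1 * a + u2 * b = 0"
  unfolding aff_def by (subst line_mem) auto

lemma Pinf_line: "Pinf \<in> PG_line (u0, u1, u2) \<longleftrightarrow> u2 = 0"
  unfolding Pinf_def by (subst line_mem) auto

lemma aff_herm: "aff a b \<in> hermitian_curve q \<longleftrightarrow> b + b ^ q + a ^ (q + 1) = 0"
  unfolding aff_def by (subst herm_mem) auto

lemma Pinf_herm: "q \<ge> 1 \<Longrightarrow> Pinf \<in> hermitian_curve q"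
  unfolding Pinf_def by (subst herm_mem) auto

lemma aff_inj: "aff a b = aff a' b' \<longleftrightarrow> a = a' \<and> b = b'"
proof
  assume "aff a b = aff a' b'"
  hence "(1, a, b) \<in> proj_point (1, a', b')" unfolding aff_def using proj_self by metis
  thus "a = a' \<and> b = b'" by (auto simp: proj_mem)
qed simp

lemma aff_neq_Pinf: "aff a b \<noteq> Pinf"
proof
  assume "aff a b = Pinf"
  hence "(1, a, b) \<in> proj_point (0, 0, 1)" unfolding aff_def Pinf_def using proj_self by metis
  thus False by (auto simp: proj_mem)
qed

lemma herm_cases:
  assumes "P \<in> hermitian_curve q" "q \<ge> 1"
  shows "P = Pinf \<or> (\<exists>a b. P = aff a b \<and> b + b ^ q + a ^ (q + 1) = 0)"
proof -
  have "P \<in> PG_points" using assms unfolding hermitian_curve_def by auto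
  then obtain x0 x1 x2 where P: "P = proj_point (x0, x1, x2)" "(x0, x1, x2) \<noteq> (0,0,0)"
    by (rule PG_cases)
  have eq: "x2 * x0 ^ q + x2 ^ q * x0 + x1 ^ (q + 1) = 0" using assms(1) P herm_mem by metis
  show ?thesis
  proof (cases "x0 = 0")
    case True
    have "(0::'a) ^ q = 0" using assms(2) by simp
    hence "x1 = 0" using eq True assms(2) by (simp add: zero_power)
    hence "x2 \<noteq> 0" using P True by simp
    have "P = proj_point (x2 * 0, x2 * 0, x2 * 1)" using P True \<open>x1 = 0\<close> by simp
    also have "\<dots> = Pinf" unfolding Pinf_def using \<open>x2 \<noteq> 0\<close> by (rule proj_scale)
    finally show ?thesis by simp
  next
    case False
    have "P = proj_point (x0 * 1, x0 * (x1 / x0), x0 * (x2 / x0))" using P False by simp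
    also have "\<dots> = aff (x1 / x0) (x2 / x0)" unfolding aff_def using False by (rule proj_scale)
    finally have P': "P = aff (x1 / x0) (x2 / x0)" .
    hence "x2 / x0 + (x2 / x0) ^ q + (x1 / x0) ^ (q + 1) = 0" using assms(1) aff_herm by metis
    thus ?thesis using P' by blast
  qed
qed

lemma line_scale:
  assumes "c \<noteq> 0"
  shows "PG_line (c * u0, c * u1, c * u2) = PG_line (u0, u1, u2)"
proof (rule set_eqI)
  fix P
  show "P \<in> PG_line (c * u0, c * u1, c * u2) \<longleftrightarrow> P \<in> PG_line (u0, u1, u2)"
  proof (cases "P \<in> PG_points")
    case True
    then obtain x0 x1 x2 where P: "P = proj_point (x0, x1, x2)" "(x0, x1, x2) \<noteq> (0,0,0)"
      by (rule PG_cases)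
    have "c * u0 * x0 + c * u1 * x1 + c * u2 * x2 = c * (u0 * x0 + u1 * x1 + u2 * x2)"
      by (simp add: algebra_simps)
    thus ?thesis unfolding P(1) using line_mem[OF P(2)] assms by simp
  next
    case False thus ?thesis unfolding PG_line_def by auto
  qed
qed

lemma line_in_lines: "(u0, u1, u2) \<noteq> (0,0,0) \<Longrightarrow> PG_line (u0, u1, u2) \<in> PG_lines"
  unfolding PG_lines_def by blast

lemma lines_cases:
  assumes "t \<in> PG_lines"
  obtains u0 u1 u2 where "t = PG_line (u0, u1, u2)" "(u0, u1, u2) \<noteq> (0,0,0)"
  using assms unfolding PG_lines_def by auto

definition Haff :: "nat \<Rightarrow> ('a::field \<times> 'a) set" where
  "Haff q = {(a, b). b + b ^ q + a ^ (q + 1) = 0}"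

definition Sset :: "bool \<Rightarrow> ('a::field \<times> 'a) set \<Rightarrow> 'a vec3 set set" where
  "Sset flag A = (if flag then {Pinf} else {}) \<union> (\<lambda>(a, b). aff a b) ` A"

lemma Sset_card:
  assumes "finite A"
  shows "card (Sset flag A) = (if flag then 1 else 0) + card A"
proof -
  have inj: "inj_on (\<lambda>(a, b). aff a b) A" by (auto simp: inj_on_def aff_inj)
  have ci: "card ((\<lambda>(a, b). aff a b) ` A) = card A" by (rule card_image[OF inj])
  have nin: "Pinf \<notin> (\<lambda>(a, b). aff a b) ` A" using aff_neq_Pinf by (auto simp: eq_commute[of Pinf])
  show ?thesis unfolding Sset_def using ci nin assms by auto
qed

lemma Sset_herm:
  assumes "A \<subseteq> Haff q" "q \<ge> 1"
  shows "Sset flag A \<subseteq> hermitian_curve q"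
  using assms Pinf_herm[OF assms(2)] unfolding Sset_def Haff_def by (auto simp: aff_herm)

locale ffield =
  fixes q p n :: nat and ty :: "('a::{finite,field}) itself"
  assumes pr: "prime p" and n1: "n \<ge> 1" and qdef: "q = p ^ n"
    and cardF: "card (UNIV :: 'a set) = q ^ 2"
begin

lemma q_ge2: "q \<ge> 2"
proof -
  have "p \<ge> 2" using pr prime_ge_2_nat by blast
  moreover have "p \<le> p ^ n" using n1 \<open>p \<ge> 2\<close> by (simp add: self_le_power)
  ultimately show ?thesis using qdef by simp
qed

lemma card_zero: "of_nat (card (UNIV :: 'a set)) = (0::'a)"
proof -
  have "(\<Sum>y\<in>(UNIV::'a set). y + 1) = (\<Sum>y\<in>UNIV. y)"
    by (rule sum.reindex_bij_witness[of _ "\<lambda>y. y - 1" "\<lambda>y. y + 1"]) auto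
  thus ?thesis by (simp add: sum.distrib)
qed

lemma CHAR_eq: "CHAR('a) = p"
proof -
  have "CHAR('a) dvd card (UNIV :: 'a set)"
    using card_zero of_nat_eq_0_iff_char_dvd by blast
  hence d: "CHAR('a) dvd p ^ (n * 2)" using cardF qdef by (simp add: power_mult)
  have fin: "finite (UNIV :: 'a set)" by simp
  have pc: "prime CHAR('a)"
    using prime_CHAR_semidom[where ?'a = 'a] finite_imp_CHAR_pos[OF fin] by blast
  have "CHAR('a) dvd p" using prime_dvd_power[OF pc d] .
  thus ?thesis using pc pr by (simp add: primes_dvd_imp_eq)
qed

lemma frob_add: "(x + y :: 'a) ^ q = x ^ q + y ^ q"
proof -
  have pc: "prime CHAR('a)" using CHAR_eq pr by simp
  show ?thesis by (rule freshmans_dream'[OF pc]) (simp add: CHAR_eq qdef)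
qed

lemma frob_neg: "(- x :: 'a) ^ q = - (x ^ q)"
proof -
  have "(x + - x) ^ q = x ^ q + (- x) ^ q" by (rule frob_add)
  moreover have "(0::'a) ^ q = 0" using q_ge2 by simp
  ultimately have "x ^ q + (- x) ^ q = 0" by simp
  thus ?thesis by (simp add: eq_neg_iff_add_eq_0 add.commute)
qed

lemma frob_diff: "(x - y :: 'a) ^ q = x ^ q - y ^ q"
  using frob_add[of x "- y"] frob_neg[of y] by simp

lemma frob_mult: "(x * y :: 'a) ^ q = x ^ q * y ^ q"
  by (simp add: power_mult_distrib)

lemma pow_card: "(x :: 'a) ^ card (UNIV :: 'a set) = x"
proof (cases "x = 0")
  case False
  have "x * (\<Prod>y\<in>UNIV-{0}. x * y) = x * x ^ (card (UNIV :: 'a set) - 1) * \<Prod>(UNIV-{0})"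
    by (simp add: prod.distrib mult_ac)
  also have "x * x ^ (card (UNIV :: 'a set) - 1) = x ^ Suc (card (UNIV :: 'a set) - 1)"
    by (subst power_Suc) auto
  also have "Suc (card (UNIV :: 'a set) - 1) = card (UNIV :: 'a set)"
    using finite_UNIV_card_ge_0[where ?'a = 'a] by simp
  also have "(\<Prod>y\<in>UNIV-{0}. x * y) = (\<Prod>y\<in>UNIV-{0}. y)"
    by (rule prod.reindex_bij_witness[of _ "\<lambda>y. y / x" "\<lambda>y. x * y"]) (use False in auto)
  finally show ?thesis
    by simp
qed (use finite_UNIV_card_ge_0[where ?'a = 'a] in auto)

lemma pow_qq: "((x :: 'a) ^ q) ^ q = x"
  using pow_card[of x] cardF by (simp add: power_mult[symmetric] power2_eq_square)

lemma trace_in: "((x :: 'a) + x ^ q) ^ q = x + x ^ q"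
  by (simp add: frob_add pow_qq add.commute)

lemma norm_in: "((x :: 'a) ^ (q + 1)) ^ q = x ^ (q + 1)"
  by (simp add: frob_mult pow_qq mult.commute)

lemma card_Fq: "card {x :: 'a. x ^ q = x} \<le> q"
proof -
  have "{x :: 'a. x ^ q = x} = {x. x ^ q + (- 1) * x + 0 = 0}" by auto
  thus ?thesis using roots_bound[OF q_ge2, of "- 1 :: 'a" 0] by simp
qed

lemma trace_fiber:
  assumes t: "(t :: 'a) ^ q = t"
  shows "card {x :: 'a. x + x ^ q = t} = q"
proof -
  have "card {x\<in>(UNIV::'a set). x + x ^ q = t} = q"
  proof (rule fiber_exact[where B = "{x :: 'a. x ^ q = x}" and b = q])
    show "(\<lambda>x. x + x ^ q) ` UNIV \<subseteq> {x :: 'a. x ^ q = x}" using trace_in by auto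
    show "card {x :: 'a. x ^ q = x} \<le> q" by (rule card_Fq)
    show "card {x \<in> UNIV. x + x ^ q = y} \<le> q" for y :: 'a
    proof -
      have "{x \<in> UNIV. x + x ^ q = y} = {x. x ^ q + 1 * x + (- y) = 0}"
        by (auto simp: algebra_simps)
      thus ?thesis using roots_bound[OF q_ge2, of 1 "- y"] by simp
    qed
    show "card (UNIV :: 'a set) = q * q" using cardF by (simp add: power2_eq_square)
  qed (use t in auto)
  thus ?thesis by simp
qed

lemma norm_fiber:
  assumes y0: "(y0 :: 'a) \<noteq> 0"
  shows "card {y :: 'a. y ^ (q + 1) = y0 ^ (q + 1)} = q + 1"
proof -
  let ?B = "{x :: 'a. x ^ q = x} - {0}"
  have "card {y\<in>(UNIV - {0::'a}). y ^ (q + 1) = y0 ^ (q + 1)} = q + 1"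
  proof (rule fiber_exact[where B = ?B and b = "q - 1"])
    show "(\<lambda>y. y ^ (q + 1)) ` (UNIV - {0}) \<subseteq> ?B" using norm_in by auto
    have "card ?B = card {x :: 'a. x ^ q = x} - 1"
      using q_ge2 by (subst card_Diff_singleton) auto
    thus "card ?B \<le> q - 1" using card_Fq by simp
    show "card {y \<in> UNIV - {0}. y ^ (q + 1) = z} \<le> q + 1" for z :: 'a
    proof -
      have "card {y \<in> UNIV - {0}. y ^ (q + 1) = z} \<le> card {y. y ^ (q + 1) + 0 * y + (- z) = 0}"
        by (rule card_mono) (auto intro: rev_finite_subset)
      also have "\<dots> \<le> q + 1" using roots_bound[of "q + 1" 0 "- z"] q_ge2 by simp
      finally show ?thesis .
    qed
    have "card (UNIV - {0::'a}) = q ^ 2 - 1" using cardF by (simp add: card_Diff_singleton)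
    also have "\<dots> = (q + 1) * (q - 1)" by (simp add: power2_eq_square algebra_simps)
    finally show "card (UNIV - {0::'a}) = (q + 1) * (q - 1)" .
    show "y0 ^ (q + 1) \<in> ?B" using y0 norm_in[of y0] by simp
  qed auto
  moreover have "{y\<in>(UNIV - {0::'a}). y ^ (q + 1) = y0 ^ (q + 1)} = {y. y ^ (q + 1) = y0 ^ (q + 1)}"
    using y0 by auto
  ultimately show ?thesis by simp
qed


lemma tangent_alg:
  fixes a b x y :: 'a
  assumes ab: "b + b ^ q + a ^ (q + 1) = 0" and xy: "y + y ^ q + x ^ (q + 1) = 0"
    and y: "y = (b + a ^ (q + 1)) + (- (a ^ q)) * x"
  shows "x = a"
proof -
  have yq: "y ^ q = b ^ q + a * a ^ q - a * x ^ q"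
  proof -
    have "y ^ q = b ^ q + (a ^ (q + 1)) ^ q + (- (a ^ q)) ^ q * x ^ q"
      unfolding y by (simp only: frob_add frob_mult)
    also have "\<dots> = b ^ q + a * a ^ q - a * x ^ q"
      using norm_in[of a] by (simp add: frob_neg pow_qq)
    finally show ?thesis .
  qed
  have "(x - a) * (x ^ q - a ^ q) = (y + y ^ q + x ^ (q + 1)) - (b + b ^ q + a ^ (q + 1))"
    unfolding yq unfolding y by (simp add: algebra_simps)
  hence "(x - a) * (x ^ q - a ^ q) = 0" using ab xy by simp
  hence "x = a \<or> x ^ q = a ^ q" by simp
  thus "x = a" by (metis pow_qq)
qed

lemma chord_alg:
  fixes c m x :: 'a
  shows "(c + m * x) + (c + m * x) ^ q + x ^ (q + 1) = (x + m ^ q) ^ (q + 1) - m * m ^ q + c + c ^ q"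
proof -
  have "(c + m * x) ^ q = c ^ q + m ^ q * x ^ q" by (simp add: frob_add frob_mult)
  moreover have "(x + m ^ q) ^ (q + 1) = (x + m ^ q) * (x ^ q + m)"
    by (simp add: frob_add pow_qq)
  ultimately show ?thesis by (simp add: algebra_simps)
qed


end

context ffield
begin

lemma unique_line:
  assumes "T \<in> PG_lines" "S \<inter> T = {P}" "\<And>t. t \<in> PG_lines \<Longrightarrow> S \<inter> t = {P} \<Longrightarrow> t = T"
  shows "\<exists>!t. t \<in> PG_lines \<and> S \<inter> t = {P}"
proof (rule ex1I[of _ T])
  show "T \<in> PG_lines \<and> S \<inter> T = {P}" using assms(1,2) by simp
  show "\<And>t. t \<in> PG_lines \<and> S \<inter> t = {P} \<Longrightarrow> t = T" using assms(3) by simp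
qed

lemma trace_nonempty:
  fixes e :: 'a
  shows "\<exists>b. b + b ^ q + e ^ (q + 1) = 0"
proof -
  have t: "(- (e ^ (q + 1))) ^ q = - (e ^ (q + 1))" by (simp only: frob_neg norm_in)
  have "card {x :: 'a. x + x ^ q = - (e ^ (q + 1))} = q" by (rule trace_fiber[OF t])
  hence "{x :: 'a. x + x ^ q = - (e ^ (q + 1))} \<noteq> {}" using q_ge2 by (metis card.empty not_numeral_le_zero)
  then obtain b where "b + b ^ q = - (e ^ (q + 1))" by auto
  hence "b + b ^ q + e ^ (q + 1) = 0" by simp
  thus ?thesis by blast
qed

lemma semioval_main:
  fixes R :: "('a \<times> 'a) set" and C :: "'a set" and flag :: bool
  assumes fC: "finite C" and cC: "card C + 1 \<le> q"
    and RH: "R \<subseteq> Haff q" and RC: "fst ` R \<subseteq> C"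
    and vert: "\<And>a b. \<not> flag \<Longrightarrow> (a, b) \<in> Haff q - R \<Longrightarrow> \<exists>b'. b' \<noteq> b \<and> (a, b') \<in> Haff q - R"
    and flagR: "flag \<Longrightarrow> R = {}"
    and ne: "flag \<or> Haff q - R \<noteq> {}"
  shows "semioval (Sset flag (Haff q - R))"
proof -
  define A where "A = Haff q - R"
  define S where "S = Sset flag A"
  have Sm: "X \<in> S \<longleftrightarrow> (flag \<and> X = Pinf) \<or> (\<exists>a b. (a, b) \<in> A \<and> X = aff a b)" for X
    unfolding S_def Sset_def by auto
  have affS: "aff a b \<in> S \<longleftrightarrow> (a, b) \<in> A" for a b
    unfolding S_def Sset_def using aff_neq_Pinf[of a b] by (auto simp: aff_inj)
  have AH: "(a, b) \<in> A \<Longrightarrow> b + b ^ q + a ^ (q + 1) = 0" for a b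
    unfolding A_def Haff_def by auto
  have S1: "S \<noteq> {}" using ne unfolding S_def Sset_def A_def by auto
  have S2: "S \<subseteq> PG_points" unfolding S_def Sset_def using aff_PG Pinf_PG by auto
  have S3: "\<exists>!t. t \<in> PG_lines \<and> S \<inter> t = {P}" if PS: "P \<in> S" for P
  proof (cases "P = Pinf")
    case True
    have fl: "flag"
    proof (rule ccontr)
      assume "\<not> flag"
      then obtain a b where "P = aff a b" using PS Sm by blast
      thus False using True aff_neq_Pinf[of a b] by simp
    qed
    hence AA: "A = Haff q" using flagR unfolding A_def by simp
    show ?thesis
    proof (rule unique_line)
      show "PG_line (1, 0, 0) \<in> PG_lines" by (rule line_in_lines) simp
      show "S \<inter> PG_line (1, 0, 0) = {P}"
      proof
        have "P \<in> PG_line (1, 0, 0)" using True by (simp add: Pinf_line)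
        thus "{P} \<subseteq> S \<inter> PG_line (1, 0, 0)" using PS by simp
        show "S \<inter> PG_line (1, 0, 0) \<subseteq> {P}"
        proof
          fix X assume X: "X \<in> S \<inter> PG_line (1, 0, 0)"
          show "X \<in> {P}"
          proof (cases "X = Pinf")
            case True thus ?thesis using \<open>P = Pinf\<close> by simp
          next
            case False
            then obtain a b where "X = aff a b" using X Sm by blast
            hence "aff a b \<in> PG_line (1, 0, 0)" using X by simp
            hence False by (simp add: aff_line)
            thus ?thesis ..
          qed
        qed
      qed
      fix t assume t: "t \<in> PG_lines" "S \<inter> t = {P}"
      obtain u0 u1 u2 where tu: "t = PG_line (u0, u1, u2)" "(u0, u1, u2) \<noteq> (0,0,0)"
        using t(1) by (rule lines_cases)
      have "Pinf \<in> t" using t(2) True by blast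
      hence "Pinf \<in> PG_line (u0, u1, u2)" using tu(1) by simp
      hence u2: "u2 = 0" by (simp only: Pinf_line)
      show "t = PG_line (1, 0, 0)"
      proof (cases "u1 = 0")
        case True
        hence "u0 \<noteq> 0" using tu u2 by simp
        have "PG_line (u0 * 1, u0 * 0, u0 * 0) = PG_line (1, 0, 0)"
          by (rule line_scale) fact
        thus ?thesis using tu u2 True by simp
      next
        case False
        define e where "e = - u0 / u1"
        obtain b where b: "b + b ^ q + e ^ (q + 1) = 0" using trace_nonempty by blast
        hence "(e, b) \<in> A" unfolding AA Haff_def by simp
        hence "aff e b \<in> S" using affS by simp
        moreover have "aff e b \<in> t" unfolding tu using False u2 by (simp add: aff_line e_def)
        ultimately have "aff e b = P" using t(2) by auto
        hence False using True aff_neq_Pinf[of e b] by simp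
        thus ?thesis ..
      qed
    qed
  next
    case False
    then obtain a b where ab: "(a, b) \<in> A" "P = aff a b" using PS Sm by auto
    have abH: "b + b ^ q + a ^ (q + 1) = 0" using AH[OF ab(1)] .
    define T where "T = PG_line (b + a ^ (q + 1), - (a ^ q), -1)"
    show ?thesis
    proof (rule unique_line)
      show "T \<in> PG_lines" unfolding T_def by (rule line_in_lines) simp
      show "S \<inter> T = {P}"
      proof
        have "b + a ^ (q + 1) + - (a ^ q) * a + -1 * b = 0" by (simp add: algebra_simps)
        thus "{P} \<subseteq> S \<inter> T" using PS ab(2) unfolding T_def by (simp add: aff_line)
        show "S \<inter> T \<subseteq> {P}"
        proof
          fix X assume X: "X \<in> S \<inter> T"
          show "X \<in> {P}"
          proof (cases "X = Pinf")
            case True thus ?thesis using X unfolding T_def by (simp add: Pinf_line)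
          next
            case False
            then obtain x y where xy: "(x, y) \<in> A" "X = aff x y" using X Sm by auto
            have l: "b + a ^ (q + 1) + - (a ^ q) * x + -1 * y = 0"
              using X xy(2) unfolding T_def by (simp add: aff_line)
            hence y: "y = (b + a ^ (q + 1)) + (- (a ^ q)) * x" by (simp add: algebra_simps)
            have "x = a" by (rule tangent_alg[OF abH AH[OF xy(1)] y])
            hence "y = b" using y by (simp add: algebra_simps)
            thus ?thesis using xy \<open>x = a\<close> ab by simp
          qed
        qed
      qed
      fix t assume t: "t \<in> PG_lines" "S \<inter> t = {P}"
      obtain u0 u1 u2 where tu: "t = PG_line (u0, u1, u2)" "(u0, u1, u2) \<noteq> (0,0,0)"
        using t(1) by (rule lines_cases)
      have "P \<in> t" using t(2) by auto
      hence Pt: "u0 + u1 * a + u2 * b = 0" using tu ab(2) by (simp add: aff_line)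
      show "t = T"
      proof (cases "u2 = 0")
        case True
        show ?thesis
        proof (cases flag)
          case True
          hence "Pinf \<in> S" using Sm by simp
          moreover have "Pinf \<in> t" using tu \<open>u2 = 0\<close> by (simp add: Pinf_line)
          ultimately have "Pinf = P" using t(2) by auto
          thus ?thesis using ab(2) aff_neq_Pinf[of a b] by simp
        next
          case False
          obtain b' where b': "b' \<noteq> b" "(a, b') \<in> A" using vert[OF False] ab(1) unfolding A_def by blast
          have "aff a b' \<in> S" using b'(2) affS by simp
          moreover have "aff a b' \<in> t" using tu \<open>u2 = 0\<close> Pt by (simp add: aff_line)
          ultimately have "aff a b' = aff a b" using t(2) ab(2) by auto
          hence False using b'(1) by (simp add: aff_inj)
          thus ?thesis ..
        qed
      next
        case False
        define m where "m = - u1 / u2"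
        define c where "c = - u0 / u2"
        have u1: "u1 = - m * u2" and u0: "u0 = - c * u2" using False by (simp_all add: m_def c_def)
        have "u2 * (b - c - m * a) = 0" using Pt unfolding u0 u1 by (simp add: algebra_simps)
        hence "b - c - m * a = 0" using False by simp
        hence bcm: "b = c + m * a" by (simp add: algebra_simps)
        show ?thesis
        proof (cases "m = - (a ^ q)")
          case True
          have "PG_line ((- u2) * (b + a ^ (q + 1)), (- u2) * (- (a ^ q)), (- u2) * (-1)) = T"
            unfolding T_def by (rule line_scale) (use False in simp)
          moreover have "(u0, u1, u2) = ((- u2) * (b + a ^ (q + 1)), (- u2) * (- (a ^ q)), (- u2) * (-1))"
          proof -
            have cc: "c = b + a * a ^ q" using bcm True by (simp add: algebra_simps)
            show ?thesis unfolding u0 u1 cc True by (simp add: algebra_simps)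
          qed
          ultimately show ?thesis using tu by simp
        next
          case mne: False
          define y0 where "y0 = a + m ^ q"
          have y0nz: "y0 \<noteq> 0"
          proof
            assume "y0 = 0"
            hence "m ^ q = - a" unfolding y0_def by (simp add: eq_neg_iff_add_eq_0 add.commute)
            hence "(m ^ q) ^ q = (- a) ^ q" by simp
            hence "m = - (a ^ q)" by (simp add: pow_qq frob_neg)
            thus False using mne by simp
          qed
          define Y where "Y = {y :: 'a. y ^ (q + 1) = y0 ^ (q + 1)}"
          have cY: "card Y = q + 1" unfolding Y_def by (rule norm_fiber[OF y0nz])
          define X where "X = (\<lambda>y. y - m ^ q) ` Y"
          have cX: "card X = q + 1" unfolding X_def using cY
            by (subst card_image) (auto simp: inj_on_def)
          have "\<not> X \<subseteq> insert a C"
          proof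
            assume "X \<subseteq> insert a C"
            hence "card X \<le> card (insert a C)" using fC by (intro card_mono) auto
            also have "\<dots> \<le> card C + 1" by (simp add: card_insert_if fC)
            finally show False using cX cC by simp
          qed
          then obtain x where x: "x \<in> X" "x \<noteq> a" "x \<notin> C" by auto
          have xn: "(x + m ^ q) ^ (q + 1) = y0 ^ (q + 1)" using x(1) unfolding X_def Y_def by auto
          have E: "(c + m * x) + (c + m * x) ^ q + x ^ (q + 1) =
                (c + m * a) + (c + m * a) ^ q + a ^ (q + 1)"
            unfolding chord_alg using xn y0_def by simp
          have La: "(c + m * a) + (c + m * a) ^ q + a ^ (q + 1) = 0" using abH unfolding bcm .
          have xH: "(x, c + m * x) \<in> Haff q" unfolding Haff_def using trans[OF E La] by simp
          have "(x, c + m * x) \<notin> R"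
          proof
            assume h: "(x, c + m * x) \<in> R"
            have "fst (x, c + m * x) \<in> fst ` R" using h by (rule imageI)
            hence "x \<in> C" using RC by auto
            thus False using x(3) by simp
          qed
          hence "(x, c + m * x) \<in> A" using xH unfolding A_def by simp
          hence "aff x (c + m * x) \<in> S" using affS by simp
          moreover have "aff x (c + m * x) \<in> t" unfolding tu aff_line u0 u1
            by (simp add: algebra_simps)
          ultimately have "aff x (c + m * x) = aff a b" using t(2) ab(2) by auto
          hence False using x(2) by (simp add: aff_inj)
          thus ?thesis ..
        qed
      qed
    qed
  qed
  have "semioval S" unfolding semioval_def
  proof (intro conjI ballI)
    show "S \<noteq> {}" by (rule S1)
    show "S \<subseteq> PG_points" by (rule S2)
    show "\<exists>!t. t \<in> PG_lines \<and> S \<inter> t = {P}" if "P \<in> S" for P by (rule S3[OF that])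
  qed
  thus ?thesis unfolding S_def A_def .
qed


lemma fib_card: "card {b :: 'a. (a, b) \<in> Haff q} = q"
proof -
  have t: "(- (a ^ (q + 1))) ^ q = - (a ^ (q + 1))" by (simp only: frob_neg norm_in)
  have "{b :: 'a. (a, b) \<in> Haff q} = {b. b + b ^ q = - (a ^ (q + 1))}"
    unfolding Haff_def by (auto simp: eq_neg_iff_add_eq_0)
  thus ?thesis using trace_fiber[OF t] by simp
qed

lemma Haff_card: "card (Haff q :: ('a \<times> 'a) set) = q ^ 3"
proof -
  have eq: "(Haff q :: ('a \<times> 'a) set) = Sigma UNIV (\<lambda>a. {b. (a, b) \<in> Haff q})" by auto
  have "card (Sigma (UNIV :: 'a set) (\<lambda>a. {b. (a, b) \<in> (Haff q :: ('a \<times> 'a) set)}))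
     = (\<Sum>a\<in>(UNIV :: 'a set). card {b. (a, b) \<in> (Haff q :: ('a \<times> 'a) set)})"
    by (rule card_SigmaI) auto
  hence "card (Haff q :: ('a \<times> 'a) set) = (\<Sum>a\<in>(UNIV :: 'a set). card {b. (a, b) \<in> Haff q})"
    unfolding eq[symmetric] .
  also have "\<dots> = card (UNIV :: 'a set) * q" using fib_card by simp
  finally show ?thesis using cardF by (simp add: power2_eq_square power3_eq_cube)
qed

lemma construct:
  assumes fC: "finite (C :: 'a set)"
  shows "\<forall>s. s \<le> card C * q \<longrightarrow> s + 1 \<noteq> card C * q \<longrightarrow> (q = 2 \<longrightarrow> s = 0 \<or> s = card C * q) \<longrightarrow>
    (\<exists>R. R \<subseteq> Haff q \<and> fst ` R \<subseteq> C \<and> card R = s \<and> (\<forall>a. card {b. (a, b) \<in> R} \<noteq> q - 1))"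
  using fC
proof (induction C rule: finite_induct)
  case empty
  show ?case
  proof (intro allI impI)
    fix s :: nat assume "s \<le> card ({} :: 'a set) * q"
    hence "s = 0" by simp
    moreover have "\<forall>a. card {b. (a, b) \<in> ({} :: ('a \<times> 'a) set)} \<noteq> q - 1" using q_ge2 by simp
    ultimately show "\<exists>R. R \<subseteq> Haff q \<and> fst ` R \<subseteq> {} \<and> card R = s \<and> (\<forall>a. card {b. (a, b) \<in> R} \<noteq> q - 1)"
      by (intro exI[of _ "{}"]) auto
  qed
next
  case (insert c C)
  show ?case
  proof (intro allI impI)
    fix s :: nat
    define M where "M = card C * q"
    have ci: "card (insert c C) * q = M + q" using insert(1,2) by (simp add: M_def)
    assume a1: "s \<le> card (insert c C) * q" and a2: "s + 1 \<noteq> card (insert c C) * q"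
      and a3: "q = 2 \<longrightarrow> s = 0 \<or> s = card (insert c C) * q"
    have Mq: "M = 0 \<or> M \<ge> q" unfolding M_def by (cases "card C") auto
    have "\<exists>x. x \<le> q \<and> x \<noteq> q - 1 \<and> x \<le> s \<and> s - x \<le> M \<and> s - x + 1 \<noteq> M \<and>
              (q = 2 \<longrightarrow> s - x = 0 \<or> s - x = M)"
    proof (cases "q = 2")
      case True
      hence "s = 0 \<or> s = M + 2" using a3 ci by simp
      moreover have "M \<noteq> 1" using True M_def by simp
      ultimately show ?thesis
      proof (elim disjE)
        assume "s = 0"
        thus ?thesis using \<open>M \<noteq> 1\<close> True by (intro exI[of _ 0]) auto
      next
        assume "s = M + 2"
        thus ?thesis using True by (intro exI[of _ 2]) auto
      qed
    next
      case False
      hence q3: "q \<ge> 3" using q_ge2 by simp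
      show ?thesis
      proof (cases "s \<le> M")
        case True
        show ?thesis
        proof (cases "s + 1 = M")
          case True
          thus ?thesis using q3 Mq \<open>q \<noteq> 2\<close> by (intro exI[of _ 1]) auto
        next
          case False
          thus ?thesis using \<open>s \<le> M\<close> \<open>q \<noteq> 2\<close> q3 by (intro exI[of _ 0]) auto
        qed
      next
        case False
        thus ?thesis using a1 a2 ci \<open>q \<noteq> 2\<close> by (intro exI[of _ "s - M"]) auto
      qed
    qed
    then obtain x where x: "x \<le> q" "x \<noteq> q - 1" "x \<le> s" "s - x \<le> M" "s - x + 1 \<noteq> M"
      "q = 2 \<longrightarrow> s - x = 0 \<or> s - x = M" by blast
    have "\<exists>R. R \<subseteq> Haff q \<and> fst ` R \<subseteq> C \<and> card R = s - x \<and> (\<forall>a. card {b. (a, b) \<in> R} \<noteq> q - 1)"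
      using insert.IH x(4,5,6) unfolding M_def by simp
    then obtain R0 where R0: "R0 \<subseteq> Haff q" "fst ` R0 \<subseteq> C" "card R0 = s - x"
      "\<forall>a. card {b. (a, b) \<in> R0} \<noteq> q - 1" by blast
    have "x \<le> card {b :: 'a. (c, b) \<in> Haff q}" using fib_card x(1) by simp
    then obtain B where B: "B \<subseteq> {b. (c, b) \<in> Haff q}" "card B = x"
      by (rule obtain_subset_with_card_n)
    define R where "R = R0 \<union> Pair c ` B"
    have fR0: "finite R0" using R0(1) by (rule finite_subset) simp
    have fB: "finite B" by simp
    have nc: "(c, b) \<notin> R0" for b
    proof
      assume "(c, b) \<in> R0"
      hence "fst (c, b) \<in> fst ` R0" by (rule imageI)
      thus False using R0(2) insert(2) by auto
    qed
    have disj: "R0 \<inter> Pair c ` B = {}" using nc by auto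
    have cR: "card R = s"
      unfolding R_def using card_Un_disjoint[OF fR0 _ disj] R0(3) B(2) x(3)
      by (simp add: card_image inj_on_def)
    have RH: "R \<subseteq> Haff q" unfolding R_def using R0(1) B(1) by auto
    have RC: "fst ` R \<subseteq> insert c C" unfolding R_def using R0(2) by auto
    have Rv: "card {b. (a, b) \<in> R} \<noteq> q - 1" for a
    proof (cases "a = c")
      case True
      have "{b. (a, b) \<in> R} = B" unfolding R_def True using nc by auto
      thus ?thesis using B(2) x(2) by simp
    next
      case False
      have "{b. (a, b) \<in> R} = {b. (a, b) \<in> R0}" unfolding R_def using False by auto
      thus ?thesis using R0(4) by simp
    qed
    show "\<exists>R. R \<subseteq> Haff q \<and> fst ` R \<subseteq> insert c C \<and> card R = s \<and> (\<forall>a. card {b. (a, b) \<in> R} \<noteq> q - 1)"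
      using RH RC cR Rv by blast
  qed
qed

end

theorem mainTheorem3:
  fixes q k :: nat
  assumes "\<exists>p n. prime p \<and> n \<ge> 1 \<and> q = p ^ n"
    and "card (UNIV :: ('a::{finite, field}) set) = q ^ 2"
    and "k = q ^ 3 - q ^ 2 + q \<or> (q ^ 3 - q ^ 2 + q + 2 \<le> k \<and> k \<le> q ^ 3 + 1)"
  shows "\<exists>S :: 'a vec3 set set. semioval S \<and> S \<subseteq> hermitian_curve q \<and> card S = k"
proof -
  obtain p n where pn: "prime p" "n \<ge> 1" "q = p ^ n" using assms(1) by blast
  interpret ffield q p n "TYPE('a)" using pn assms(2) by unfold_locales auto
  have q2: "q \<ge> 2" by (rule q_ge2)
  define Q2 where "Q2 = q ^ 2"
  define Q3 where "Q3 = q ^ 3"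
  have Q2q: "Q2 = q * q" unfolding Q2_def by (simp add: power2_eq_square)
  have Q3q: "Q3 = q * Q2" unfolding Q3_def Q2_def by (simp add: power3_eq_cube power2_eq_square)
  have Q2ge: "Q2 \<ge> 2 * q" using q2 Q2q by simp
  have Q3ge: "Q3 \<ge> 2 * Q2" using q2 Q3q by simp
  have k: "k = Q3 - Q2 + q \<or> (Q3 - Q2 + q + 2 \<le> k \<and> k \<le> Q3 + 1)"
    using assms(3) unfolding Q2_def Q3_def .
  have fH: "finite (Haff q :: ('a \<times> 'a) set)" by simp
  have cH: "card (Haff q :: ('a \<times> 'a) set) = Q3" unfolding Q3_def by (rule Haff_card)
  show ?thesis
  proof (cases "k = Q3 + 1")
    case True
    define S where "S = Sset True (Haff q - ({} :: ('a \<times> 'a) set))"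
    have "semioval S" unfolding S_def
      by (rule semioval_main[where C = "{}"]) (use q2 in auto)
    moreover have "S \<subseteq> hermitian_curve q" unfolding S_def by (rule Sset_herm) (use q2 in auto)
    moreover have "card S = k"
    proof -
      have "card S = (if True then 1 else 0) + card (Haff q - ({} :: ('a \<times> 'a) set))"
        unfolding S_def by (rule Sset_card) simp
      thus ?thesis using cH True by simp
    qed
    ultimately show ?thesis by blast
  next
    case False
    define s where "s = Q3 - k"
    have kle: "k \<le> Q3" using k False Q3ge Q2ge by auto
    have "q - 1 \<le> card (UNIV :: 'a set)" using assms(2) Q2ge unfolding Q2_def by simp
    then obtain C :: "'a set" where C: "C \<subseteq> UNIV" "card C = q - 1" "finite C"
      by (rule obtain_subset_with_card_n)
    have CQ: "card C * q = Q2 - q" using C(2) Q2q by (simp add: algebra_simps)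
    have s1: "s \<le> card C * q" using k kle Q3ge Q2ge unfolding CQ s_def by auto
    have s2: "s + 1 \<noteq> card C * q" using k kle Q3ge Q2ge False unfolding CQ s_def by auto
    have s3: "q = 2 \<longrightarrow> s = 0 \<or> s = card C * q"
    proof
      assume q2': "q = 2"
      hence "Q2 = 4" "Q3 = 8" using Q2q Q3q by simp_all
      thus "s = 0 \<or> s = card C * q" using k kle False C(2) unfolding CQ s_def q2' by auto
    qed
    obtain R where R: "R \<subseteq> Haff q" "fst ` R \<subseteq> C" "card R = s" "\<forall>a. card {b. (a, b) \<in> R} \<noteq> q - 1"
      using construct[OF C(3), rule_format, OF s1 s2 s3[rule_format]] by blast
    define A where "A = Haff q - R"
    have cA: "card A = k"
    proof -
      have "card A = card (Haff q :: ('a \<times> 'a) set) - card R" unfolding A_def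
        by (rule card_Diff_subset) (use R(1) finite_subset in auto)
      thus ?thesis using cH R(3) kle unfolding s_def by simp
    qed
    have vert: "\<exists>b'. b' \<noteq> b \<and> (a, b') \<in> A" if ab: "(a, b) \<in> A" for a b
    proof (rule ccontr)
      assume no: "\<not> (\<exists>b'. b' \<noteq> b \<and> (a, b') \<in> A)"
      define F where "F = {b. (a, b) \<in> (Haff q :: ('a \<times> 'a) set)}"
      define G where "G = {b. (a, b) \<in> R}"
      have GF: "G \<subseteq> F" unfolding G_def F_def using R(1) by auto
      have "F - G = {b}" unfolding F_def G_def using ab no unfolding A_def by auto
      hence "card F - card G = 1" using card_Diff_subset[OF _ GF] by simp
      moreover have "card F = q" unfolding F_def by (rule fib_card)
      ultimately have "card G = q - 1" by simp
      thus False using R(4) unfolding G_def by blast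
    qed
    define S where "S = Sset False A"
    have "semioval S" unfolding S_def A_def
    proof (rule semioval_main[where C = C])
      show "card C + 1 \<le> q" using C(2) q2 by simp
      have "k \<noteq> 0" using k Q3ge Q2ge q2 by auto
      hence "A \<noteq> {}" using cA by auto
      thus "False \<or> Haff q - R \<noteq> {}" unfolding A_def by simp
      show "finite C" by (rule C(3))
      show "R \<subseteq> Haff q" by (rule R(1))
      show "fst ` R \<subseteq> C" by (rule R(2))
      show "\<exists>b'. b' \<noteq> b \<and> (a, b') \<in> Haff q - R" if "\<not> False" "(a, b) \<in> Haff q - R" for a b
        using vert[of a b] that(2) unfolding A_def by simp
      show "R = {}" if "False" using that by simp
    qed
    moreover have "S \<subseteq> hermitian_curve q" unfolding S_def A_def by (rule Sset_herm) (use q2 in auto)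
    moreover have "card S = k"
    proof -
      have "card S = (if False then 1 else 0) + card A"
        unfolding S_def by (rule Sset_card) (simp add: A_def)
      thus ?thesis using cA by simp
    qed
    ultimately show ?thesis by blast
  qed
qed

end
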